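(* Let $l=\sum_{i=4}^8 m_ie_i$ with $m_i\in\mathbb Z$ and $\sum_{i=4}^8m_i$ even (these are exactly the vectors of $E_8$ orthogonal to $L_3=\langle e_2+e_1,e_3-e_2,e_2-e_1\rangle_\mathbb Z\cong A_3$). Then $l$ is orthogonal to exactly $12$ roots of $E_8$ if and only if (i) $m_j\ne0$ for every $j$; (ii) $m_i\ne\pm m_j$ for all $4\le i<j\le 8$; (iii) $\sum_{i=4}^8\pm m_i\ne0$ for every choice of signs. Moreover, $l$ is orthogonal to exactly $14$ roots of $E_8$ if (i) and (iii) hold and there is exactly one pair $4\le i<j\le8$ with $m_i=\pm m_j$.
   Context: $e_1,\dots,e_8$ is an orthonormal basis of $\mathbb R^8$ and $E_8=\{x\in\mathbb Z^8\cup(\mathbb Z+\tfrac12)^8\mid \sum_i x_i\in2\mathbb Z\}$; its roots (vectors of square $2$) are the $112$ vectors $\pm e_i\pm e_j$ ($i<j$) and the $128$ vectors $\frac12\sum_{i=1}^8(-1)^{\nu_i}e_i$ with $\sum\nu_i$ even. *)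

theory Defs
  imports Complex_Main
begin

text \<open>Vectors of R^8 are represented as functions nat => real, with coordinates
  indexed by 1..8 (coordinate i is the coefficient of e_i) and value 0 outside {1..8}.\<close>

definition E8 :: "(nat \<Rightarrow> real) set" where
  "E8 = {x. (\<forall>i. i \<notin> {1..8} \<longrightarrow> x i = 0)
          \<and> ((\<forall>i\<in>{1..8}. x i \<in> \<int>) \<or> (\<forall>i\<in>{1..8}. x i - 1/2 \<in> \<int>))
          \<and> (\<exists>k::int. (\<Sum>i=1..8. x i) = 2 * of_int k)}"

definition inner8 :: "(nat \<Rightarrow> real) \<Rightarrow> (nat \<Rightarrow> real) \<Rightarrow> real" where
  "inner8 x y = (\<Sum>i=1..8. x i * y i)"

definition E8_roots :: "(nat \<Rightarrow> real) set" where
  "E8_roots = {x \<in> E8. inner8 x x = 2}"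

end

theory Submission imports Defs begin

lemma sum18: "(\<Sum>i=(1::nat)..8. f i) = f 1 + f 2 + f 3 + f 4 + f 5 + f 6 + f 7 + (f 8::'a::comm_monoid_add)"
  by (simp add: sum.atLeast_Suc_atMost numeral_eq_Suc add.assoc)
lemma sum48: "(\<Sum>i=(4::nat)..8. f i) = f 4 + f 5 + f 6 + f 7 + (f 8::'a::comm_monoid_add)"
  by (simp add: sum.atLeast_Suc_atMost numeral_eq_Suc add.assoc)

lemma sum_two:
  assumes "finite I" "a \<in> I" "b \<in> I" "a \<noteq> b" "\<forall>i\<in>I. i \<noteq> a \<and> i \<noteq> b \<longrightarrow> g i = 0"
  shows "sum g I = g a + (g b :: 'a::comm_monoid_add)"
proof -
  have "sum g I = sum g {a,b}"
    by (rule sum.mono_neutral_right) (use assms in auto)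
  then show ?thesis using assms by simp
qed

lemma int_sq_le2: fixes x :: real assumes "x \<in> \<int>" "x * x \<le> 2" shows "x = -1 \<or> x = 0 \<or> x = 1"
proof -
  obtain k where k: "x = of_int k" using assms(1) Ints_cases by blast
  have "k * k \<le> 2" using assms(2) k by (metis of_int_le_iff of_int_mult of_int_numeral)
  then have "k = -1 \<or> k = 0 \<or> k = 1"
    proof -
    have "\<not> k \<ge> 2" proof assume "k \<ge> 2" then have "k*k \<ge> 2*2" by (intro mult_mono) auto then show False using \<open>k*k \<le> 2\<close> by simp qed
    moreover have "\<not> k \<le> -2" proof assume "k \<le> -2" then have "(-k)*(-k) \<ge> 2*2" by (intro mult_mono) auto then show False using \<open>k*k \<le> 2\<close> by simp qed
    ultimately show ?thesis by auto
  qed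
  then show ?thesis using k by auto
qed

lemma half_sq_ge: fixes x :: real assumes "x - 1/2 \<in> \<int>" shows "x * x \<ge> 1/4"
proof -
  obtain k where k: "x - 1/2 = of_int k" using assms Ints_cases by blast
  have "k * (k+1) \<ge> 0"
    by (cases "k \<ge> 0") (auto simp: mult_nonneg_nonneg mult_nonpos_nonpos)
  then have "real_of_int k * (of_int k + 1) \<ge> 0"
    by (metis of_int_0_le_iff of_int_1 of_int_add of_int_mult)
  moreover have "x = of_int k + 1/2" using k by simp
  ultimately show ?thesis by (simp add: algebra_simps) 
qed

lemma sq_half: fixes x :: real assumes "x * x - 1/4 = 0" shows "x = 1/2 \<or> x = -1/2"
proof -
  have "(x - 1/2) * (x + 1/2) = 0" using assms by (simp add: algebra_simps)
  then show ?thesis by auto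
qed

lemma root_cases:
  assumes "r \<in> E8_roots"
  shows "(\<forall>i. i \<notin> {1..8} \<longrightarrow> r i = 0) \<and>
    ((\<exists>a b. 1 \<le> a \<and> a < b \<and> b \<le> 8 \<and> (r a = 1 \<or> r a = -1) \<and> (r b = 1 \<or> r b = -1)
       \<and> (\<forall>i. i \<noteq> a \<and> i \<noteq> b \<longrightarrow> r i = 0))
     \<or> (\<forall>i\<in>{1..8}. r i = 1/2 \<or> r i = -1/2))"
proof -
  have out: "\<forall>i. i \<notin> {1..8} \<longrightarrow> r i = 0" and
    ih: "(\<forall>i\<in>{1..8}. r i \<in> \<int>) \<or> (\<forall>i\<in>{1..8}. r i - 1/2 \<in> \<int>)" and
    sq: "(\<Sum>i=1..8. r i * r i) = 2"
    using assms by (auto simp: E8_roots_def E8_def inner8_def)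
  show ?thesis
  proof (cases "\<forall>i\<in>{1..8}. r i \<in> \<int>")
    case True
    have le: "r i * r i \<le> 2" if "i \<in> {1..8}" for i
    proof -
      have "r i * r i \<le> (\<Sum>i=1..8. r i * r i)"
        by (rule member_le_sum) (use that in auto)
      then show ?thesis using sq by simp
    qed
    have v: "r i = -1 \<or> r i = 0 \<or> r i = 1" if "i \<in> {1..8}" for i
      using int_sq_le2[OF bspec[OF True that] le[OF that]] .
    define S where "S = {i\<in>{1..8}. r i \<noteq> 0}"
    have "(\<Sum>i=1..8. r i * r i) = (\<Sum>i=1..8. if r i \<noteq> 0 then 1 else 0)"
    proof (rule sum.cong)
      fix i assume "i \<in> {1..8::nat}" then show "r i * r i = (if r i \<noteq> 0 then 1 else 0)" using v[of i] by auto
    qed simp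
    also have "\<dots> = (\<Sum>i\<in>S. 1)" unfolding S_def
      by (subst sum.inter_filter) auto
    also have "\<dots> = real (card S)" by simp
    finally have "card S = 2" using sq by simp
    then obtain a b where ab: "S = {a,b}" "a \<noteq> b" by (meson card_2_iff)
    have key: "\<exists>a b. 1 \<le> a \<and> a < b \<and> b \<le> 8 \<and> (r a = 1 \<or> r a = -1) \<and> (r b = 1 \<or> r b = -1)
       \<and> (\<forall>i. i \<noteq> a \<and> i \<noteq> b \<longrightarrow> r i = 0)" if "S = {a,b}" "a < b" for a b
    proof (intro exI conjI)
      show "1 \<le> a" "a < b" "b \<le> 8" using that S_def by auto
      show "r a = 1 \<or> r a = -1" "r b = 1 \<or> r b = -1" using that S_def v by auto
      show "\<forall>i. i \<noteq> a \<and> i \<noteq> b \<longrightarrow> r i = 0" using that S_def out by auto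
    qed
    show ?thesis
    proof (cases "a < b")
      case True then show ?thesis using key ab out by blast
    next
      case False then have "b < a" using ab by auto
      then show ?thesis using key[of b a] ab out by (auto simp: insert_commute)
    qed
  next
    case False
    then have h: "\<forall>i\<in>{1..8}. r i - 1/2 \<in> \<int>" using ih by blast
    have "(\<Sum>i=1..8. r i * r i - 1/4) = 0" using sq by (simp add: sum_subtractf)
    moreover have "\<forall>i\<in>{1..8}. r i * r i - 1/4 \<ge> 0" using h half_sq_ge by auto
    ultimately have "\<forall>i\<in>{1..8}. r i * r i - 1/4 = 0"
      using sum_nonneg_eq_0_iff[of "{1..8}" "\<lambda>i. r i * r i - 1/4"] by auto
    then have "\<forall>i\<in>{1..8}. r i = 1/2 \<or> r i = -1/2"
      by (metis (no_types) sq_half)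
    then show ?thesis using out by blast
  qed
qed


lemma sum_one:
  assumes "finite I" "b \<in> I" "\<forall>i\<in>I. i \<noteq> b \<longrightarrow> g i = 0"
  shows "sum g I = (g b :: 'a::comm_monoid_add)"
proof -
  have "sum g I = sum g {b}"
    by (rule sum.mono_neutral_right) (use assms in auto)
  then show ?thesis by simp
qed

definition vec :: "nat \<Rightarrow> nat \<Rightarrow> real \<Rightarrow> real \<Rightarrow> nat \<Rightarrow> real" where
  "vec a b sa sb = (\<lambda>i. if i = a then sa else if i = b then sb else 0)"

lemma vec_inner:
  assumes "1 \<le> a" "a < b" "b \<le> 8"
  shows "inner8 x (vec a b sa sb) = x a * sa + x b * sb"
proof -
  have "inner8 x (vec a b sa sb) = x a * vec a b sa sb a + x b * vec a b sa sb b"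
    unfolding inner8_def by (rule sum_two) (use assms in \<open>auto simp: vec_def\<close>)
  then show ?thesis using assms by (simp add: vec_def)
qed

lemma vec_root:
  assumes "1 \<le> a" "a < b" "b \<le> 8" "sa = 1 \<or> sa = -1" "sb = 1 \<or> sb = -1"
  shows "vec a b sa sb \<in> E8_roots"
proof -
  have s: "(\<Sum>i=1..8. vec a b sa sb i) = sa + sb"
  proof -
    have "(\<Sum>i=1..8. vec a b sa sb i) = vec a b sa sb a + vec a b sa sb b"
      by (rule sum_two) (use assms in \<open>auto simp: vec_def\<close>)
    then show ?thesis using assms by (simp add: vec_def)
  qed
  have ev: "\<exists>k::int. sa + sb = 2 * of_int k"
    using assms(4,5)
  proof (elim disjE)
    assume "sa = 1" "sb = 1" then show ?thesis by (intro exI[of _ 1]) simp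
  next
    assume "sa = 1" "sb = -1" then show ?thesis by (intro exI[of _ 0]) simp
  next
    assume "sa = -1" "sb = 1" then show ?thesis by (intro exI[of _ 0]) simp
  next
    assume "sa = -1" "sb = -1" then show ?thesis by (intro exI[of _ "-1"]) simp
  qed
  have "inner8 (vec a b sa sb) (vec a b sa sb) = 2"
    using vec_inner[OF assms(1-3)] assms by (auto simp: vec_def)
  moreover have "vec a b sa sb \<in> E8"
    unfolding E8_def using assms s ev by (auto simp: vec_def)
  ultimately show ?thesis by (simp add: E8_roots_def)
qed

definition phi :: "(nat \<Rightarrow> real) \<Rightarrow> real \<times> real \<times> real \<times> real \<times> real \<times> real \<times> real \<times> real" where
  "phi r = (r 1, r 2, r 3, r 4, r 5, r 6, r 7, r 8)"

lemma phi_inj: "inj_on phi {r. \<forall>i. i \<notin> {1..8} \<longrightarrow> r i = 0}"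
proof (rule inj_onI)
  fix r s assume r: "r \<in> {r. \<forall>i. i \<notin> {1..8} \<longrightarrow> r i = 0}" and s: "s \<in> {r. \<forall>i. i \<notin> {1..8} \<longrightarrow> r i = 0}"
    and e: "phi r = phi s"
  show "r = s"
  proof
    fix i
    show "r i = s i"
    proof (cases "i \<in> {1..8}")
      case True
      then have "i = 1 \<or> i = 2 \<or> i = 3 \<or> i = 4 \<or> i = 5 \<or> i = 6 \<or> i = 7 \<or> i = 8" by auto
      then show ?thesis using e by (auto simp: phi_def)
    next
      case False then show ?thesis using r s by auto
    qed
  qed
qed

definition A12 :: "(nat \<Rightarrow> real) set" where
  "A12 = {vec 1 2 1 1, vec 1 2 1 (-1), vec 1 2 (-1) 1, vec 1 2 (-1) (-1),
          vec 1 3 1 1, vec 1 3 1 (-1), vec 1 3 (-1) 1, vec 1 3 (-1) (-1),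
          vec 2 3 1 1, vec 2 3 1 (-1), vec 2 3 (-1) 1, vec 2 3 (-1) (-1)}"

lemma card_A12: "card A12 = 12"
proof -
  have "inj_on phi A12"
    by (rule inj_on_subset[OF phi_inj]) (auto simp: A12_def vec_def)
  then have "card A12 = card (phi ` A12)" by (simp add: card_image)
  also have "\<dots> = 12" by (simp add: A12_def vec_def phi_def)
  finally show ?thesis .
qed

lemma A0_eq: "{r \<in> E8_roots. \<forall>i\<in>{4..8}. r i = 0} = A12"
proof
  show "A12 \<subseteq> {r \<in> E8_roots. \<forall>i\<in>{4..8}. r i = 0}"
  proof -
    have "\<forall>r\<in>A12. r \<in> E8_roots" unfolding A12_def by (simp add: vec_root)
    moreover have "\<forall>r\<in>A12. \<forall>i\<in>{4..8}. r i = 0" unfolding A12_def by (auto simp: vec_def)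
    ultimately show ?thesis by blast
  qed
next
  show "{r \<in> E8_roots. \<forall>i\<in>{4..8}. r i = 0} \<subseteq> A12"
  proof safe
    fix r assume r: "r \<in> E8_roots" and z: "\<forall>i\<in>{4..8}. r i = 0"
    note rc = root_cases[OF r]
    show "r \<in> A12"
    proof (cases "\<forall>i\<in>{1..8}. r i = 1/2 \<or> r i = -1/2")
      case True then have "r 4 = 1/2 \<or> r 4 = -1/2" by auto
      then show ?thesis using z by auto
    next
      case False
      then obtain a b where ab: "1 \<le> a" "a < b" "b \<le> 8" "r a = 1 \<or> r a = -1" "r b = 1 \<or> r b = -1"
        "\<forall>i. i \<noteq> a \<and> i \<noteq> b \<longrightarrow> r i = 0" using rc by blast
      have rv: "r = vec a b (r a) (r b)" using ab by (auto simp: vec_def fun_eq_iff)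
      have "a \<notin> {4..8}" "b \<notin> {4..8}" using z ab by auto
      then have "(a = 1 \<and> b = 2) \<or> (a = 1 \<and> b = 3) \<or> (a = 2 \<and> b = 3)" using ab by auto
      then show ?thesis using ab(4,5) rv unfolding A12_def by auto
    qed
  qed
qed

lemma linner: "inner8 (\<lambda>i. if i \<in> {4..8} then real_of_int (m i) else 0) r = (\<Sum>i=4..8. of_int (m i) * r i)"
  unfolding inner8_def sum18 sum48 by simp


lemma pm_odd: "(s::int) = 1 \<or> s = -1 \<Longrightarrow> odd s" by auto

lemma half_witness:
  fixes s :: "nat \<Rightarrow> int"
  assumes s: "\<forall>i\<in>{4..8}. s i = 1 \<or> s i = -1"
  shows "\<exists>w\<in>E8_roots. \<forall>i\<in>{4..8}. w i = of_int (s i) / 2"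
proof -
  define T where "T = (\<Sum>i=4..8. s i)"
  define t3 :: int where "t3 = (if 4 dvd (T + 3) then 1 else -1)"
  define w where "w = (\<lambda>i::nat. if i \<in> {4..8} then real_of_int (s i) / 2
      else if i \<in> {1..3} then (if i = 3 then real_of_int t3 / 2 else 1/2) else 0)"
  have s4: "s 4 = 1 \<or> s 4 = -1" "s 5 = 1 \<or> s 5 = -1" "s 6 = 1 \<or> s 6 = -1"
    "s 7 = 1 \<or> s 7 = -1" "s 8 = 1 \<or> s 8 = -1" using s by auto
  have T5: "T = s 4 + s 5 + s 6 + s 7 + s 8" unfolding T_def sum48 by simp
  have "odd T" unfolding T5 using pm_odd[OF s4(1)] pm_odd[OF s4(2)] pm_odd[OF s4(3)] pm_odd[OF s4(4)] pm_odd[OF s4(5)]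
    by simp
  then have d: "4 dvd (2 + t3 + T)" unfolding t3_def by presburger
  then obtain k where k: "2 + t3 + T = 4 * k" by (auto elim: dvdE)
  have t3v: "t3 = 1 \<or> t3 = -1" unfolding t3_def by auto
  have wv: "w i = 1/2 \<or> w i = -1/2" if "i \<in> {1..8}" for i
  proof (cases "i \<in> {4..8}")
    case True then show ?thesis using s unfolding w_def by auto
  next
    case False then show ?thesis using that t3v unfolding w_def by auto
  qed
  have sumw: "(\<Sum>i=1..8. w i) = real_of_int (2 + t3 + T) / 2"
    unfolding sum18 T5 w_def by (simp add: field_simps)
  have "w \<in> E8"
    unfolding E8_def
  proof (intro CollectI conjI)
    show "\<forall>i. i \<notin> {1..8} \<longrightarrow> w i = 0" unfolding w_def by auto
    have "\<forall>i\<in>{1..8}. w i - 1/2 \<in> \<int>"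
    proof
      fix i :: nat assume "i \<in> {1..8}" then have "w i = 1/2 \<or> w i = -1/2" by (rule wv)
      then show "w i - 1/2 \<in> \<int>"
      proof
        assume "w i = 1/2" then have e: "w i - 1/2 = 0" by linarith show ?thesis unfolding e by simp
      next
        assume "w i = -1/2" then have e: "w i - 1/2 = -1" by linarith show ?thesis unfolding e by simp
      qed
    qed
    then show "(\<forall>i\<in>{1..8}. w i \<in> \<int>) \<or> (\<forall>i\<in>{1..8}. w i - 1/2 \<in> \<int>)" by blast
    show "\<exists>k::int. (\<Sum>i=1..8. w i) = 2 * of_int k"
      using sumw k by (intro exI[of _ k]) simp
  qed
  moreover have "inner8 w w = 2"
  proof -
    have "inner8 w w = (\<Sum>i::nat=1..8. (1/4::real))"
      unfolding inner8_def
    proof (rule sum.cong)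
      fix i :: nat assume "i \<in> {1..8}" then have "w i = 1/2 \<or> w i = -1/2" by (rule wv)
      then show "w i * w i = 1/4"
      proof
        assume h: "w i = 1/2" show ?thesis unfolding h by simp
      next
        assume h: "w i = -1/2" show ?thesis unfolding h by simp
      qed
    qed simp
    then show ?thesis by simp
  qed
  ultimately show ?thesis unfolding E8_roots_def w_def by (intro bexI[of _ w]) (auto simp: w_def)
qed

lemma sum48_half:
  fixes r :: "nat \<Rightarrow> real" and s m :: "nat \<Rightarrow> int"
  assumes "\<forall>i\<in>{4..8}. r i = of_int (s i) / 2"
  shows "(\<Sum>i=4..8. of_int (m i) * r i) = of_int (\<Sum>i=4..8. s i * m i) / 2"
proof -
  have "r 4 = of_int (s 4) / 2" "r 5 = of_int (s 5) / 2" "r 6 = of_int (s 6) / 2"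
    "r 7 = of_int (s 7) / 2" "r 8 = of_int (s 8) / 2" using assms by auto
  note h = this
  show ?thesis unfolding sum48 h by (simp add: field_simps)
qed

lemma orth_cases:
  fixes m :: "nat \<Rightarrow> int"
  assumes i: "\<forall>j\<in>{4..8}. m j \<noteq> 0"
    and iii: "\<forall>s::nat \<Rightarrow> int. (\<forall>i\<in>{4..8}. s i = 1 \<or> s i = -1) \<longrightarrow> (\<Sum>i=4..8. s i * m i) \<noteq> 0"
    and r: "r \<in> E8_roots" and o: "inner8 (\<lambda>i. if i \<in> {4..8} then real_of_int (m i) else 0) r = 0"
  shows "(\<forall>i\<in>{4..8}. r i = 0) \<or> (\<exists>a b. 4 \<le> a \<and> a < b \<and> b \<le> 8 \<and> r = vec a b (r a) (r b)
      \<and> (r a = 1 \<or> r a = -1) \<and> (r b = 1 \<or> r b = -1) \<and> of_int (m a) * r a + of_int (m b) * r b = 0)"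
proof -
  note rc = root_cases[OF r]
  have o2: "(\<Sum>i=4..8. of_int (m i) * r i) = 0" using o linner by metis
  show ?thesis
  proof (cases "\<forall>i\<in>{1..8}. r i = 1/2 \<or> r i = -1/2")
    case True
    define s :: "nat \<Rightarrow> int" where "s i = (if r i = 1/2 then 1 else -1)" for i
    have rs: "\<forall>i\<in>{4..8}. r i = of_int (s i) / 2" using True unfolding s_def by auto
    have "\<forall>i\<in>{4..8}. s i = 1 \<or> s i = -1" unfolding s_def by auto
    then have "(\<Sum>i=4..8. s i * m i) \<noteq> 0" using iii by blast
    moreover have "of_int (\<Sum>i=4..8. s i * m i) / 2 = (0::real)" using sum48_half[OF rs, of m] o2 by simp
    ultimately show ?thesis by simp
  next
    case False
    then obtain a b where ab: "1 \<le> a" "a < b" "b \<le> 8" "r a = 1 \<or> r a = -1" "r b = 1 \<or> r b = -1"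
      "\<forall>i. i \<noteq> a \<and> i \<noteq> b \<longrightarrow> r i = 0" using rc by blast
    have rv: "r = vec a b (r a) (r b)" using ab by (auto simp: vec_def fun_eq_iff)
    show ?thesis
    proof (cases "b \<le> 3")
      case True then show ?thesis using ab by auto
    next
      case b3: False
      show ?thesis
      proof (cases "a \<le> 3")
        case True
        have "(\<Sum>i=4..8. of_int (m i) * r i) = of_int (m b) * r b"
          by (rule sum_one) (use ab b3 True in auto)
        then have "m b = 0" using o2 ab by auto
        then show ?thesis using i ab b3 by auto
      next
        case False
        have "(\<Sum>i=4..8. of_int (m i) * r i) = of_int (m a) * r a + of_int (m b) * r b"
          by (rule sum_two) (use ab b3 False in auto)
        then show ?thesis using o2 ab rv False by (intro disjI2 exI[of _ a] exI[of _ b]) auto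
      qed
    qed
  qed
qed


lemma pm_rel:
  fixes x y :: int and ra rb :: real
  assumes "ra = 1 \<or> ra = -1" "rb = 1 \<or> rb = -1" "of_int x * ra + of_int y * rb = 0"
  shows "x = y \<or> x = - y"
proof -
  have "of_int x = (of_int y :: real) \<or> of_int x = (- of_int y :: real)" using assms by auto
  then show ?thesis by (metis of_int_eq_iff of_int_minus)
qed

theorem proposition7p9:
  fixes m :: "nat \<Rightarrow> int"
  assumes "even (\<Sum>i=4..8. m i)"
  defines "l \<equiv> (\<lambda>i. if i \<in> {4..8} then real_of_int (m i) else 0)"
  shows "(card {r \<in> E8_roots. inner8 l r = 0} = 12 \<longleftrightarrow>
           (\<forall>j\<in>{4..8}. m j \<noteq> 0)
         \<and> (\<forall>i\<in>{4..8}. \<forall>j\<in>{4..8}. i < j \<longrightarrow> m i \<noteq> m j \<and> m i \<noteq> - m j)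
         \<and> (\<forall>s::nat \<Rightarrow> int. (\<forall>i\<in>{4..8}. s i = 1 \<or> s i = -1) \<longrightarrow> (\<Sum>i=4..8. s i * m i) \<noteq> 0))
       \<and> (((\<forall>j\<in>{4..8}. m j \<noteq> 0)
         \<and> (\<forall>s::nat \<Rightarrow> int. (\<forall>i\<in>{4..8}. s i = 1 \<or> s i = -1) \<longrightarrow> (\<Sum>i=4..8. s i * m i) \<noteq> 0)
         \<and> card {(i, j). 4 \<le> i \<and> i < j \<and> j \<le> (8::nat) \<and> (m i = m j \<or> m i = - m j)} = 1)
         \<longrightarrow> card {r \<in> E8_roots. inner8 l r = 0} = 14)"
proof -
  define Orth where "Orth = {r \<in> E8_roots. inner8 l r = 0}"
  define A0 where "A0 = {r \<in> E8_roots. \<forall>i\<in>{4..8}. r i = 0}"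
  have cA0: "card A0 = 12" using A0_eq card_A12 A0_def by simp
  have finA0: "finite A0" using cA0 by (intro card_ge_0_finite) simp
  have li: "inner8 l r = (\<Sum>i=4..8. of_int (m i) * r i)" for r unfolding l_def by (rule linner)
  have A0O: "A0 \<subseteq> Orth"
  proof
    fix r assume "r \<in> A0"
    then have "r \<in> E8_roots" "\<forall>i\<in>{4..8}. r i = 0" by (auto simp: A0_def)
    then show "r \<in> Orth" unfolding Orth_def using li[of r] by simp
  qed
  have vecO: "vec a b sa sb \<in> Orth" if "1 \<le> a" "a < b" "b \<le> 8" "sa = 1 \<or> sa = -1" "sb = 1 \<or> sb = -1"
    "l a * sa + l b * sb = 0" for a b sa sb
    using vec_root[OF that(1-5)] vec_inner[OF that(1-3)] that(6) unfolding Orth_def by simp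
  have halfO: "\<exists>w\<in>Orth. w 4 \<noteq> 0" if s: "\<forall>i\<in>{4..8}. s i = 1 \<or> s i = -1" and z: "(\<Sum>i=4..8. s i * m i) = 0" for s
  proof -
    obtain w where w: "w \<in> E8_roots" "\<forall>i\<in>{4..8}. w i = of_int (s i) / 2" using half_witness[OF s] by blast
    have "inner8 l w = 0" using li[of w] sum48_half[OF w(2), of m] z by simp
    moreover have "w 4 \<noteq> 0"
    proof -
      have "w 4 = of_int (s 4) / 2" "s 4 = 1 \<or> s 4 = -1" using w(2) s by auto
      then show ?thesis by auto
    qed
    ultimately show ?thesis using w(1) unfolding Orth_def by blast
  qed
  have notA0: "w \<notin> A0" if "j \<in> {4..8}" "w j \<noteq> 0" for w j using that by (auto simp: A0_def)
  have oc: "(\<forall>i\<in>{4..8}. r i = 0) \<or> (\<exists>a b. 4 \<le> a \<and> a < b \<and> b \<le> 8 \<and> r = vec a b (r a) (r b)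
      \<and> (r a = 1 \<or> r a = -1) \<and> (r b = 1 \<or> r b = -1) \<and> of_int (m a) * r a + of_int (m b) * r b = 0)"
    if i: "\<forall>j\<in>{4..8}. m j \<noteq> 0"
    and iii: "\<forall>s::nat \<Rightarrow> int. (\<forall>i\<in>{4..8}. s i = 1 \<or> s i = -1) \<longrightarrow> (\<Sum>i=4..8. s i * m i) \<noteq> 0"
    and r: "r \<in> Orth" for r
    using orth_cases[OF i iii, of r] r unfolding Orth_def l_def by blast
  have part1: "card Orth = 12 \<longleftrightarrow>
           (\<forall>j\<in>{4..8}. m j \<noteq> 0)
         \<and> (\<forall>i\<in>{4..8}. \<forall>j\<in>{4..8}. i < j \<longrightarrow> m i \<noteq> m j \<and> m i \<noteq> - m j)
         \<and> (\<forall>s::nat \<Rightarrow> int. (\<forall>i\<in>{4..8}. s i = 1 \<or> s i = -1) \<longrightarrow> (\<Sum>i=4..8. s i * m i) \<noteq> 0)"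
    (is "_ \<longleftrightarrow> ?i \<and> ?ii \<and> ?iii")
  proof
    assume c: "card Orth = 12"
    then have finO: "finite Orth" by (intro card_ge_0_finite) simp
    have eq: "A0 = Orth" using card_subset_eq[OF finO A0O] c cA0 by simp
    show "?i \<and> ?ii \<and> ?iii"
    proof (intro conjI)
      show ?i
      proof
        fix j assume j: "j \<in> {4..8::nat}"
        show "m j \<noteq> 0"
        proof
          assume "m j = 0"
          then have "vec 1 j 1 1 \<in> Orth" using j by (intro vecO) (auto simp: l_def)
          moreover have "vec 1 j 1 1 \<notin> A0" using j by (intro notA0[of j]) (auto simp: vec_def)
          ultimately show False using eq by blast
        qed
      qed
      show ?ii
      proof (intro ballI impI)
        fix i j assume ij: "i \<in> {4..8::nat}" "j \<in> {4..8::nat}" "i < j"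
        show "m i \<noteq> m j \<and> m i \<noteq> - m j"
        proof (intro conjI notI)
          assume "m i = m j"
          then have "vec i j 1 (-1) \<in> Orth" using ij by (intro vecO) (auto simp: l_def)
          moreover have "vec i j 1 (-1) \<notin> A0" using ij by (intro notA0[of i]) (auto simp: vec_def)
          ultimately show False using eq by blast
        next
          assume "m i = - m j"
          then have "vec i j 1 1 \<in> Orth" using ij by (intro vecO) (auto simp: l_def)
          moreover have "vec i j 1 1 \<notin> A0" using ij by (intro notA0[of i]) (auto simp: vec_def)
          ultimately show False using eq by blast
        qed
      qed
      show ?iii
      proof (intro allI impI notI)
        fix s :: "nat \<Rightarrow> int" assume "\<forall>i\<in>{4..8}. s i = 1 \<or> s i = -1" "(\<Sum>i=4..8. s i * m i) = 0"
        then obtain w where "w \<in> Orth" "w 4 \<noteq> 0" using halfO by blast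
        then show False using eq notA0[of 4 w] by auto
      qed
    qed
  next
    assume h: "?i \<and> ?ii \<and> ?iii"
    have "Orth \<subseteq> A0"
    proof
      fix r assume r: "r \<in> Orth"
      show "r \<in> A0"
      proof (cases "\<forall>i\<in>{4..8}. r i = 0")
        case True then show ?thesis using r unfolding Orth_def A0_def by auto
      next
        case False
        then obtain a b where ab: "4 \<le> a" "a < b" "b \<le> 8" "r a = 1 \<or> r a = -1" "r b = 1 \<or> r b = -1"
          "of_int (m a) * r a + of_int (m b) * r b = 0" using oc[of r] h r by blast
        then have "m a = m b \<or> m a = - m b" using pm_rel by blast
        moreover have "m a \<noteq> m b \<and> m a \<noteq> - m b"
        proof -
          have "a \<in> {4..8}" "b \<in> {4..8}" using ab by auto
          then show ?thesis using h ab(2) by blast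
        qed
        ultimately show ?thesis by blast
      qed
    qed
    then have "Orth = A0" using A0O by blast
    then show "card Orth = 12" using cA0 by simp
  qed
  have part2: "card Orth = 14" if i: "\<forall>j\<in>{4..8}. m j \<noteq> 0"
    and iii: "\<forall>s::nat \<Rightarrow> int. (\<forall>i\<in>{4..8}. s i = 1 \<or> s i = -1) \<longrightarrow> (\<Sum>i=4..8. s i * m i) \<noteq> 0"
    and P: "card {(i, j). 4 \<le> i \<and> i < j \<and> j \<le> (8::nat) \<and> (m i = m j \<or> m i = - m j)} = 1"
  proof -
    obtain p where p: "{(i, j). 4 \<le> i \<and> i < j \<and> j \<le> (8::nat) \<and> (m i = m j \<or> m i = - m j)} = {p}"
      using P card_1_singletonE by blast
    obtain i0 j0 where pij: "p = (i0, j0)" by fastforce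
    have "(i0, j0) \<in> {(i, j). 4 \<le> i \<and> i < j \<and> j \<le> (8::nat) \<and> (m i = m j \<or> m i = - m j)}"
      unfolding p pij by simp
    then have ij0: "4 \<le> i0" "i0 < j0" "j0 \<le> 8" "m i0 = m j0 \<or> m i0 = - m j0" by simp_all
    have uniq: "a = i0 \<and> b = j0" if "4 \<le> a" "a < b" "b \<le> 8" "m a = m b \<or> m a = - m b" for a b
    proof -
      have "(a, b) \<in> {(i, j). 4 \<le> i \<and> i < j \<and> j \<le> (8::nat) \<and> (m i = m j \<or> m i = - m j)}"
        using that by simp
      then show ?thesis unfolding p pij by simp
    qed
    define \<sigma> :: real where "\<sigma> = (if m i0 = m j0 then -1 else 1)"
    have sg: "\<sigma> = 1 \<or> \<sigma> = -1" unfolding \<sigma>_def by auto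
    have rel: "of_int (m i0) + \<sigma> * of_int (m j0) = 0" using ij0(4) unfolding \<sigma>_def by auto
    have mj0: "m j0 \<noteq> 0" using i ij0 by auto
    define v where "v = vec i0 j0 1 \<sigma>"
    define v' where "v' = vec i0 j0 (-1) (-\<sigma>)"
    have "Orth = A0 \<union> {v, v'}"
    proof
      show "Orth \<subseteq> A0 \<union> {v, v'}"
      proof
        fix r assume r: "r \<in> Orth"
        show "r \<in> A0 \<union> {v, v'}"
        proof (cases "\<forall>i\<in>{4..8}. r i = 0")
          case True then show ?thesis using r unfolding Orth_def A0_def by auto
        next
          case False
          then obtain a b where ab: "4 \<le> a" "a < b" "b \<le> 8" "r = vec a b (r a) (r b)"
            "r a = 1 \<or> r a = -1" "r b = 1 \<or> r b = -1"
            "of_int (m a) * r a + of_int (m b) * r b = 0" using oc[OF i iii r] by blast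
          then have "m a = m b \<or> m a = - m b" using pm_rel by blast
          then have e: "a = i0" "b = j0" using uniq ab by auto
          have eq: "of_int (m i0) = - \<sigma> * of_int (m j0)" using rel by linarith
          have "(r b - r a * \<sigma>) * of_int (m j0) = of_int (m i0) * r a + of_int (m j0) * r b"
            unfolding eq by (simp add: algebra_simps)
          also have "\<dots> = 0" using ab(7) unfolding e .
          finally have "r b = r a * \<sigma>" using mj0 by simp
          then have rv: "r = vec i0 j0 (r i0) (r i0 * \<sigma>)" using ab(4) unfolding e by simp
          have "r = v \<or> r = v'" using ab(5) unfolding e
          proof
            assume "r i0 = 1" then show ?thesis using rv unfolding v_def by simp
          next
            assume "r i0 = -1" then show ?thesis using rv unfolding v'_def by simp
          qed
          then show ?thesis by blast
        qed
      qed
    next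
      have li0: "l i0 = of_int (m i0)" "l j0 = of_int (m j0)" using ij0 by (simp_all add: l_def)
      have "v \<in> Orth" unfolding v_def
        by (rule vecO) (use ij0 sg rel in \<open>simp_all add: li0 algebra_simps\<close>)
      moreover have "v' \<in> Orth" unfolding v'_def
        by (rule vecO) (use ij0 sg rel in \<open>auto simp: li0 algebra_simps\<close>)
      ultimately show "A0 \<union> {v, v'} \<subseteq> Orth" using A0O by blast
    qed
    moreover have "v \<notin> A0" unfolding v_def using ij0 by (intro notA0[of i0]) (auto simp: vec_def)
    moreover have "v' \<notin> A0" unfolding v'_def using ij0 by (intro notA0[of i0]) (auto simp: vec_def)
    moreover have "v \<noteq> v'" unfolding v_def v'_def vec_def by (auto simp: fun_eq_iff)
    ultimately have "card Orth = card A0 + card {v, v'}"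
      using finA0 card_Un_disjoint[of A0 "{v, v'}"] by auto
    then show ?thesis using cA0 \<open>v \<noteq> v'\<close> by simp
  qed
  show ?thesis using part1 part2 unfolding Orth_def by blast
qed

end
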